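(* Let $P=P(x,y)$ be a quasi-polynomial in two noncommuting variables $x,y$ whose coefficients are polynomials in the entries $x_{ij},y_{ij}$ ($1\le i,j\le 2$). If $P$ is a quasi-identity of $M_2$, then $P$ is a consequence of the Cayley–Hamilton identity, i.e. $P$ lies in the T-ideal generated by $Q_2$.
   Context: $F$ is a field of characteristic $0$, $M_2=M_2(F)$. Quasi-polynomials in $x,y$ are elements of the free algebra on $x,y$ over $F[x_{ij},y_{ij}]$; $P$ is a quasi-identity of $M_2$ if $P(A,B)=0$ for all $A=(a_{ij}),B=(b_{ij})\in M_2$, substituting $A,B$ for $x,y$ and $a_{ij},b_{ij}$ for $x_{ij},y_{ij}$. Let $\xi,\eta$ be the generic matrices $(x_{ij}),(y_{ij})$, and for monomials $\mathrm{tr}(\cdot)$ denote the trace of the corresponding product of generic matrices. $Q_2(x_1,x_2)=x_1x_2+x_2x_1-\mathrm{tr}(x_1)x_2-\mathrm{tr}(x_2)x_1+\mathrm{tr}(x_1)\mathrm{tr}(x_2)-\mathrm{tr}(x_1x_2)$. A T-ideal is an ideal (of the quasi-polynomial algebra in arbitrarily many variables) closed under simultaneous substitutions of variables $x_k\mapsto H_k$ and of their entry-variables $x^{(k)}_{ij}\mapsto$ the $(i,j)$-entry of the matrix obtained from $H_k$ by replacing variables with generic matrices. *)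

theory Defs
  imports "HOL-Analysis.Analysis" "HOL-Library.Poly_Mapping"
begin

datatype word = Word (letters: "nat list")

instantiation word :: monoid_add
begin
definition zero_word :: word where "zero_word = Word []"
definition plus_word :: "word \<Rightarrow> word \<Rightarrow> word" where
  "plus_word u v = Word (letters u @ letters v)"
instance by standard (auto simp: zero_word_def plus_word_def)
end

text \<open>Entry variable x^(k)_ij is represented by the triple (k,i,j), i,j in the 2-element type.\<close>
type_synonym evar = "nat \<times> 2 \<times> 2"

type_synonym 'a mpoly = "(evar \<Rightarrow>\<^sub>0 nat) \<Rightarrow>\<^sub>0 'a"

text \<open>Quasi-polynomials: free associative algebra on x_0, x_1, ... over 'a mpoly.\<close>
type_synonym 'a qpoly = "word \<Rightarrow>\<^sub>0 'a mpoly"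

definition pvar :: "evar \<Rightarrow> 'a::comm_ring_1 mpoly" where
  "pvar v = Poly_Mapping.single (Poly_Mapping.single v 1) 1"

definition pconst :: "'a::comm_ring_1 \<Rightarrow> 'a mpoly" where
  "pconst c = Poly_Mapping.single 0 c"

definition peval :: "('a::comm_ring_1 \<Rightarrow> 'b::comm_ring_1) \<Rightarrow> (evar \<Rightarrow> 'b) \<Rightarrow> 'a mpoly \<Rightarrow> 'b" where
  "peval cf val p = (\<Sum>m\<in>Poly_Mapping.keys p. cf (Poly_Mapping.lookup p m) *
      (\<Prod>v\<in>Poly_Mapping.keys (m :: evar \<Rightarrow>\<^sub>0 nat). val v ^ Poly_Mapping.lookup m v))"

definition qvar :: "nat \<Rightarrow> 'a::comm_ring_1 qpoly" where
  "qvar k = Poly_Mapping.single (Word [k]) 1"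

definition qconst :: "'a::comm_ring_1 mpoly \<Rightarrow> 'a qpoly" where
  "qconst c = Poly_Mapping.single (Word []) c"

definition mscal :: "'b::semiring_1 \<Rightarrow> 'b^2^2 \<Rightarrow> 'b^2^2" where
  "mscal c M = (\<chi> i j. c * M $ i $ j)"

definition mword :: "(nat \<Rightarrow> 'b::semiring_1^2^2) \<Rightarrow> word \<Rightarrow> 'b^2^2" where
  "mword A w = foldr (\<lambda>k M. A k ** M) (letters w) (mat 1)"

definition qeval :: "('a::comm_ring_1 mpoly \<Rightarrow> 'b::comm_ring_1) \<Rightarrow> (nat \<Rightarrow> 'b^2^2) \<Rightarrow> 'a qpoly \<Rightarrow> 'b^2^2" where
  "qeval cf A P = (\<Sum>w\<in>Poly_Mapping.keys P. mscal (cf (Poly_Mapping.lookup P w)) (mword A w))"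

definition generic_matrix :: "nat \<Rightarrow> 'a::comm_ring_1 mpoly^2^2" where
  "generic_matrix k = (\<chi> i j. pvar (k, i, j))"

definition generic_eval :: "'a::comm_ring_1 qpoly \<Rightarrow> 'a mpoly^2^2" where
  "generic_eval H = qeval id generic_matrix H"

text \<open>tr(H): trace of H evaluated at generic matrices, as a scalar quasi-polynomial.\<close>
definition qtr :: "'a::comm_ring_1 qpoly \<Rightarrow> 'a qpoly" where
  "qtr H = qconst (trace (generic_eval H))"

definition Q2 :: "'a::comm_ring_1 qpoly \<Rightarrow> 'a qpoly \<Rightarrow> 'a qpoly" where
  "Q2 x1 x2 = x1 * x2 + x2 * x1 - qtr x1 * x2 - qtr x2 * x1 + qtr x1 * qtr x2 - qtr (x1 * x2)"

definition qsubst :: "(nat \<Rightarrow> 'a::comm_ring_1 qpoly) \<Rightarrow> 'a qpoly \<Rightarrow> 'a qpoly" where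
  "qsubst \<sigma> P = (\<Sum>w\<in>Poly_Mapping.keys P.
      qconst (peval pconst (\<lambda>(k, i, j). generic_eval (\<sigma> k) $ i $ j) (Poly_Mapping.lookup P w))
      * prod_list (map \<sigma> (letters w)))"

inductive_set T_ideal :: "'a::comm_ring_1 qpoly set \<Rightarrow> 'a qpoly set" for S where
  gen: "p \<in> S \<Longrightarrow> p \<in> T_ideal S"
| zero: "0 \<in> T_ideal S"
| add: "p \<in> T_ideal S \<Longrightarrow> q \<in> T_ideal S \<Longrightarrow> p + q \<in> T_ideal S"
| mult_left: "p \<in> T_ideal S \<Longrightarrow> a * p \<in> T_ideal S"
| mult_right: "p \<in> T_ideal S \<Longrightarrow> p * a \<in> T_ideal S"
| subst: "p \<in> T_ideal S \<Longrightarrow> qsubst \<sigma> p \<in> T_ideal S"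

text \<open>P is a quasi-polynomial in x = x_0, y = x_1 only (coefficients in x_ij = x^(0)_ij,
  y_ij = x^(1)_ij).\<close>
definition two_var_qpoly :: "'a::comm_ring_1 qpoly \<Rightarrow> bool" where
  "two_var_qpoly P \<longleftrightarrow>
     (\<forall>w\<in>Poly_Mapping.keys P. set (letters w) \<subseteq> {0, 1} \<and>
        (\<forall>m\<in>Poly_Mapping.keys (Poly_Mapping.lookup P w). \<forall>v\<in>Poly_Mapping.keys m. fst v \<le> 1))"

definition assign2 :: "'b^2^2 \<Rightarrow> 'b^2^2 \<Rightarrow> nat \<Rightarrow> 'b^2^2" where
  "assign2 A B k = (if k = 0 then A else B)"

definition quasi_identity_M2 :: "'a::field qpoly \<Rightarrow> bool" where
  "quasi_identity_M2 P \<longleftrightarrow>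
     (\<forall>A B :: 'a^2^2. qeval (peval id (\<lambda>(k, i, j). assign2 A B k $ i $ j)) (assign2 A B) P = 0)"

end

theory Submission
  imports Defs
begin


definition psum :: "('k \<Rightarrow> 'v::zero \<Rightarrow> 'c::comm_monoid_add) \<Rightarrow> ('k \<Rightarrow>\<^sub>0 'v) \<Rightarrow> 'c" where
  "psum T p = (\<Sum>k\<in>Poly_Mapping.keys p. T k (Poly_Mapping.lookup p k))"

lemma psum_superset:
  assumes "\<And>k. T k 0 = 0" "finite S" "Poly_Mapping.keys p \<subseteq> S"
  shows "psum T p = (\<Sum>k\<in>S. T k (Poly_Mapping.lookup p k))"
  unfolding psum_def
  by (rule sum.mono_neutral_left) (use assms in \<open>auto simp: in_keys_iff\<close>)

lemma psum_add:
  assumes "\<And>k. T k 0 = 0" "\<And>k a b. T k (a + b) = T k a + T k b"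
  shows "psum T (p + q) = psum T p + psum T (q :: 'k \<Rightarrow>\<^sub>0 'v::monoid_add)"
proof -
  let ?S = "Poly_Mapping.keys p \<union> Poly_Mapping.keys q"
  have "psum T (p + q) = (\<Sum>k\<in>?S. T k (Poly_Mapping.lookup (p+q) k))"
    by (rule psum_superset) (use assms keys_add[of p q] in auto)
  also have "\<dots> = (\<Sum>k\<in>?S. T k (Poly_Mapping.lookup p k)) + (\<Sum>k\<in>?S. T k (Poly_Mapping.lookup q k))"
    by (simp add: lookup_add assms sum.distrib)
  also have "\<dots> = psum T p + psum T q"
    by (subst (1 2) psum_superset[where S="?S"]) (use assms in auto)
  finally show ?thesis .
qed

lemma psum_zero: "psum T 0 = 0"
  by (simp add: psum_def)

lemma psum_single:
  assumes "\<And>k. T k 0 = 0"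
  shows "psum T (Poly_Mapping.single k c) = T k c"
  by (subst psum_superset[where S="{k}"]) (use assms in auto)

lemma psum_sum:
  assumes "\<And>k. T k 0 = 0" "\<And>k a b. T k (a + b) = T k a + T k b"
  shows "psum T (\<Sum>i\<in>I. f i) = (\<Sum>i\<in>I. psum T (f i :: 'k \<Rightarrow>\<^sub>0 'v::comm_monoid_add))"
proof (induction I rule: infinite_finite_induct)
  case (insert x F)
  then show ?case by (simp add: psum_add[OF assms])
qed (auto simp: psum_zero)

lemma pm_expand: "p = (\<Sum>k\<in>Poly_Mapping.keys p. Poly_Mapping.single k (Poly_Mapping.lookup p k))"
proof (rule poly_mapping_eqI)
  fix k
  show "Poly_Mapping.lookup p k = Poly_Mapping.lookup (\<Sum>k\<in>Poly_Mapping.keys p. Poly_Mapping.single k (Poly_Mapping.lookup p k)) k"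
    by (simp add: lookup_sum lookup_single when_def in_keys_iff)
qed

lemma mul_sum_left:
  assumes "\<And>x y z. mul (x + y) z = mul x z + mul y z" "\<And>z. mul 0 z = 0"
  shows "mul (\<Sum>i\<in>I. f i) z = (\<Sum>i\<in>I. mul (f i) z)"
  by (induction I rule: infinite_finite_induct) (auto simp: assms)

lemma mul_sum_right:
  assumes "\<And>x y z. mul z (x + y) = mul z x + mul z y" "\<And>z. mul z 0 = 0"
  shows "mul z (\<Sum>i\<in>I. f i) = (\<Sum>i\<in>I. mul z (f i))"
  by (induction I rule: infinite_finite_induct) (auto simp: assms)

lemma psum_mult:
  fixes T :: "'k::monoid_add \<Rightarrow> 'v::semiring_0 \<Rightarrow> 'c::comm_monoid_add"
  assumes T0: "\<And>k. T k 0 = 0" and Tadd: "\<And>k a b. T k (a + b) = T k a + T k b"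
    and ml: "\<And>x y z. mul (x + y) z = mul x z + mul y z" "\<And>z. mul 0 z = 0"
    and mr: "\<And>x y z. mul z (x + y) = mul z x + mul z y" "\<And>z. mul z 0 = 0"
    and Tm: "\<And>k l a b. T (k + l) (a * b) = mul (T k a) (T l b)"
  shows "psum T (p * q) = mul (psum T p) (psum T q)"
proof -
  let ?K = "Poly_Mapping.keys p" and ?L = "Poly_Mapping.keys q"
  have "p * q = (\<Sum>k\<in>?K. Poly_Mapping.single k (Poly_Mapping.lookup p k)) *
                (\<Sum>l\<in>?L. Poly_Mapping.single l (Poly_Mapping.lookup q l))"
    by (subst (1) pm_expand, subst (2) pm_expand) (rule refl)
  also have "\<dots> = (\<Sum>k\<in>?K. \<Sum>l\<in>?L. Poly_Mapping.single (k + l) (Poly_Mapping.lookup p k * Poly_Mapping.lookup q l))"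
    by (simp add: sum_distrib_left sum_distrib_right mult_single) (rule sum.swap)
  finally have pq: "p * q = \<dots>" .
  have "psum T (p * q) = (\<Sum>k\<in>?K. \<Sum>l\<in>?L. T (k + l) (Poly_Mapping.lookup p k * Poly_Mapping.lookup q l))"
    unfolding pq by (simp add: psum_sum[of T, OF T0 Tadd] psum_single[of T, OF T0])
  also have "\<dots> = (\<Sum>k\<in>?K. \<Sum>l\<in>?L. mul (T k (Poly_Mapping.lookup p k)) (T l (Poly_Mapping.lookup q l)))"
    by (simp add: Tm)
  also have "\<dots> = mul (psum T p) (psum T q)"
    unfolding psum_def
    by (simp add: mul_sum_left[of mul, OF ml] mul_sum_right[of mul, OF mr]) (rule sum.swap)
  finally show ?thesis .
qed


definition rhom :: "('a::ring_1 \<Rightarrow> 'b::ring_1) \<Rightarrow> bool" where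
  "rhom h \<longleftrightarrow> (\<forall>x y. h (x + y) = h x + h y) \<and> (\<forall>x y. h (x * y) = h x * h y) \<and> h 1 = 1"

lemma rhom_add: "rhom h \<Longrightarrow> h (x + y) = h x + h y" by (simp add: rhom_def)
lemma rhom_mult: "rhom h \<Longrightarrow> h (x * y) = h x * h y" by (simp add: rhom_def)
lemma rhom_one: "rhom h \<Longrightarrow> h 1 = 1" by (simp add: rhom_def)
lemma rhom_zero: "rhom h \<Longrightarrow> h 0 = 0"
  using rhom_add[of h 0 0] by simp
lemma rhom_uminus: "rhom h \<Longrightarrow> h (- x) = - h x"
  using rhom_add[of h x "-x"] rhom_zero[of h] add.inverse_unique[of "h x" "h (-x)"] by simp
lemma rhom_diff: "rhom h \<Longrightarrow> h (x - y) = h x - h y"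
  using rhom_add[of h x "-y"] rhom_uminus[of h y] by simp
lemma rhom_sum: "rhom h \<Longrightarrow> h (\<Sum>i\<in>I. f i) = (\<Sum>i\<in>I. h (f i))"
  by (induction I rule: infinite_finite_induct) (auto simp: rhom_zero rhom_add)
lemma rhom_prod: "rhom h \<Longrightarrow> h (\<Prod>i\<in>I. f i) = (\<Prod>i\<in>I. h (f i :: 'a::comm_ring_1) :: 'b::comm_ring_1)"
  by (induction I rule: infinite_finite_induct) (auto simp: rhom_one rhom_mult)
lemma rhom_power: "rhom h \<Longrightarrow> h (x ^ n) = h x ^ n"
  by (induction n) (auto simp: rhom_one rhom_mult)
lemma rhom_id: "rhom id" by (simp add: rhom_def)
lemma rhom_comp: "rhom f \<Longrightarrow> rhom g \<Longrightarrow> rhom (f \<circ> g)" by (simp add: rhom_def)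

lemmas rhom_simps = rhom_add rhom_mult rhom_one rhom_zero rhom_uminus rhom_diff rhom_power

definition mon :: "(evar \<Rightarrow> 'b::comm_ring_1) \<Rightarrow> (evar \<Rightarrow>\<^sub>0 nat) \<Rightarrow> 'b" where
  "mon val m = (\<Prod>v\<in>Poly_Mapping.keys m. val v ^ Poly_Mapping.lookup m v)"

lemma mon_superset:
  assumes "finite S" "Poly_Mapping.keys m \<subseteq> S"
  shows "mon val m = (\<Prod>v\<in>S. val v ^ Poly_Mapping.lookup m v)"
  unfolding mon_def
  by (rule prod.mono_neutral_left) (use assms in \<open>auto simp: in_keys_iff\<close>)

lemma mon_add: "mon val (m + n) = mon val m * mon val n"
proof -
  let ?S = "Poly_Mapping.keys m \<union> Poly_Mapping.keys n"
  have "mon val (m + n) = (\<Prod>v\<in>?S. val v ^ Poly_Mapping.lookup (m + n) v)"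
    by (rule mon_superset) (use keys_add[of m n] in auto)
  also have "\<dots> = (\<Prod>v\<in>?S. val v ^ Poly_Mapping.lookup m v) * (\<Prod>v\<in>?S. val v ^ Poly_Mapping.lookup n v)"
    by (simp add: lookup_add power_add prod.distrib)
  also have "\<dots> = mon val m * mon val n"
    by (subst (1 2) mon_superset[where S="?S"]) auto
  finally show ?thesis .
qed

lemma mon_zero [simp]: "mon val 0 = 1" by (simp add: mon_def)
lemma mon_single [simp]: "mon val (Poly_Mapping.single v n) = val v ^ n"
  by (cases "n = 0") (auto simp: mon_def)

lemma rhom_mon: "rhom h \<Longrightarrow> h (mon val m) = mon (h \<circ> val) m"
  by (simp add: mon_def rhom_prod rhom_power)

lemma peval_psum: "peval cf val p = psum (\<lambda>m c. cf c * mon val m) p"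
  by (simp add: peval_def psum_def mon_def)

context
  fixes cf :: "'a::comm_ring_1 \<Rightarrow> 'b::comm_ring_1"
  assumes cf: "rhom cf"
begin

lemma peval_add: "peval cf val (p + q) = peval cf val p + peval cf val q"
  unfolding peval_psum
proof (rule psum_add)
  fix k a b
  have "cf (a + b) = cf a + cf b" by (rule rhom_add[OF cf])
  then show "cf (a + b) * mon val k = cf a * mon val k + cf b * mon val k"
    by (simp add: distrib_right)
qed (simp add: rhom_zero[OF cf])

lemma peval_mult: "peval cf val (p * q) = peval cf val p * peval cf val q"
  unfolding peval_psum
  by (rule psum_mult[where mul="(*)"]) (auto simp: rhom_zero[OF cf] rhom_mult[OF cf] rhom_add[OF cf] distrib_right distrib_left mon_add)

lemma peval_single: "peval cf val (Poly_Mapping.single m c) = cf c * mon val m"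
  unfolding peval_psum by (rule psum_single) (simp add: rhom_zero[OF cf])

lemma peval_one: "peval cf val 1 = 1"
  by (metis peval_single single_one mon_zero rhom_one[OF cf] mult_1)

lemma rhom_peval: "rhom (peval cf val)"
  by (simp add: rhom_def peval_add peval_mult peval_one)

lemma peval_pvar [simp]: "peval cf val (pvar v) = val v"
  by (simp add: pvar_def peval_single rhom_one[OF cf])

lemma peval_pconst [simp]: "peval cf val (pconst c) = cf c"
  by (simp add: pconst_def peval_single)

lemma peval_comp:
  assumes h: "rhom h"
  shows "h (peval cf val p) = peval (h \<circ> cf) (h \<circ> val) p"
  by (simp add: peval_def rhom_sum[OF h] rhom_mult[OF h] rhom_prod[OF h] rhom_power[OF h])

end

lemma rhom_pconst: "rhom (pconst :: 'a::comm_ring_1 \<Rightarrow> 'a mpoly)"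
  by (simp add: rhom_def pconst_def single_add mult_single)

lemma pvar_pow: "(pvar v :: 'a::comm_ring_1 mpoly) ^ n = Poly_Mapping.single (Poly_Mapping.single v n) 1"
  by (induction n) (simp_all add: pvar_def mult_single flip: single_add)

lemma mon_sum: "mon val (\<Sum>v\<in>V. g v) = (\<Prod>v\<in>V. mon val (g v))"
  by (induction V rule: infinite_finite_induct) (auto simp: mon_add)

lemma single_sum: "Poly_Mapping.single (\<Sum>v\<in>V. g v) (1::'a::comm_ring_1) = (\<Prod>v\<in>V. Poly_Mapping.single (g v) 1)"
proof (induction V rule: infinite_finite_induct)
  case (insert x F)
  have "Poly_Mapping.single (\<Sum>v\<in>insert x F. g v) (1::'a) = Poly_Mapping.single (g x) 1 * Poly_Mapping.single (sum g F) 1"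
    using insert(1,2) by (simp add: mult_single)
  then show ?case using insert by simp
qed auto

lemma mon_pvar: "mon pvar m = Poly_Mapping.single m (1::'a::comm_ring_1)"
proof -
  have "mon pvar m = (\<Prod>v\<in>Poly_Mapping.keys m. (pvar v :: 'a mpoly) ^ Poly_Mapping.lookup m v)"
    by (simp add: mon_def)
  also have "\<dots> = (\<Prod>v\<in>Poly_Mapping.keys m. Poly_Mapping.single (Poly_Mapping.single v (Poly_Mapping.lookup m v)) 1)"
    by (simp add: pvar_pow)
  also have "\<dots> = Poly_Mapping.single (\<Sum>v\<in>Poly_Mapping.keys m. Poly_Mapping.single v (Poly_Mapping.lookup m v)) 1"
    by (simp add: single_sum)
  also have "\<dots> = Poly_Mapping.single m 1"
    using pm_expand[of m] by simp
  finally show ?thesis .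
qed

lemma peval_pconst_pvar: "peval pconst pvar p = p"
proof -
  have "peval pconst pvar p = (\<Sum>m\<in>Poly_Mapping.keys p. Poly_Mapping.single m (Poly_Mapping.lookup p m))"
    unfolding peval_def mon_def[symmetric] mon_pvar
    by (rule sum.cong) (simp_all add: pconst_def mult_single)
  then show ?thesis using pm_expand[of p] by simp
qed


lemma univ_vanish:
  fixes e :: "nat \<Rightarrow> 'a::field_char_0"
  assumes "finite N" "\<And>t. (\<Sum>n\<in>N. e n * t ^ n) = 0"
  shows "\<forall>n\<in>N. e n = 0"
proof -
  define p where "p = (\<Sum>n\<in>N. monom (e n) n)"
  have "\<forall>t. poly p t = 0" using assms(2) by (simp add: p_def poly_sum poly_monom)
  then have "p = 0" using poly_all_0_iff_0 by blast
  have "coeff p n = (if n \<in> N then e n else 0)" for n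
    using assms(1) by (simp add: p_def coeff_sum)
  then show ?thesis using \<open>p = 0\<close> by (metis coeff_0)
qed

lemma mon_split:
  "mon val m = mon val (Poly_Mapping.update v 0 m) * val v ^ Poly_Mapping.lookup m v"
proof -
  have k: "Poly_Mapping.keys (Poly_Mapping.update v 0 m) = Poly_Mapping.keys m - {v}"
    by (simp add: keys_update)
  have a: "mon val (Poly_Mapping.update v 0 m) = (\<Prod>u\<in>Poly_Mapping.keys m - {v}. val u ^ Poly_Mapping.lookup m u)"
    unfolding mon_def k by (rule prod.cong) (auto simp: lookup_update)
  show ?thesis
  proof (cases "v \<in> Poly_Mapping.keys m")
    case True
    then show ?thesis unfolding a by (simp add: mon_def prod.remove mult.commute)
  next
    case False
    then show ?thesis unfolding a by (simp add: mon_def in_keys_iff)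
  qed
qed

lemma mon_indep:
  assumes "v \<notin> Poly_Mapping.keys m"
  shows "mon (val(v := t)) m = mon val m"
  unfolding mon_def by (rule prod.cong) (use assms in auto)

lemma vl_aux:
  fixes c :: "'i \<Rightarrow> 'a::field_char_0" and \<mu> :: "'i \<Rightarrow> (evar \<Rightarrow>\<^sub>0 nat)"
  assumes "finite V"
  shows "finite K \<Longrightarrow> inj_on \<mu> K \<Longrightarrow> (\<forall>i\<in>K. Poly_Mapping.keys (\<mu> i) \<subseteq> V) \<Longrightarrow>
    (\<forall>val. (\<Sum>i\<in>K. c i * mon val (\<mu> i)) = 0) \<Longrightarrow> \<forall>i\<in>K. c i = 0"
  using assms
proof (induction V arbitrary: K c \<mu> rule: finite_induct)
  case empty
  show ?case
  proof
    fix i assume i: "i \<in> K"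
    have z: "\<mu> j = 0" if "j \<in> K" for j
      using empty(3) that by (metis poly_mapping_eqI lookup_zero not_in_keys_iff_lookup_eq_zero subset_empty empty_iff)
    have "K = {i}"
      using i empty(2) z by (auto simp: inj_on_def)
    then show "c i = 0" using empty(4) z[OF i] by simp
  qed
next
  case (insert v V)
  let ?n = "\<lambda>i. Poly_Mapping.lookup (\<mu> i) v"
  let ?m = "\<lambda>i. Poly_Mapping.update v 0 (\<mu> i)"
  define E where "E n val = (\<Sum>i\<in>{i\<in>K. ?n i = n}. c i * mon val (?m i))" for n val
  have Ekey: "v \<notin> Poly_Mapping.keys (?m i)" for i by (simp add: keys_update)
  have decomp: "(\<Sum>i\<in>K. c i * mon val (\<mu> i)) = (\<Sum>n\<in>?n ` K. E n val * val v ^ n)" for val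
  proof -
    have "(\<Sum>i\<in>K. c i * mon val (\<mu> i)) = (\<Sum>n\<in>?n ` K. \<Sum>i\<in>{i\<in>K. ?n i = n}. c i * mon val (\<mu> i))"
      by (rule sum.image_gen) (rule insert.prems(1))
    also have "\<dots> = (\<Sum>n\<in>?n ` K. E n val * val v ^ n)"
      unfolding E_def sum_distrib_right
      by (rule sum.cong, simp, rule sum.cong, simp) (subst mon_split[of _ _ v], simp add: mult.assoc)
    finally show ?thesis .
  qed
  have E0: "E n val = 0" if "n \<in> ?n ` K" for n val
  proof -
    have "\<forall>n\<in>?n ` K. E n val = 0"
    proof (rule univ_vanish)
      show "finite (?n ` K)" using insert.prems(1) by simp
      fix t
      have "(\<Sum>n\<in>?n ` K. E n (val(v := t)) * (val(v := t)) v ^ n) = 0"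
        using insert.prems(4) decomp by metis
      moreover have "E n (val(v := t)) = E n val" for n
        unfolding E_def by (rule sum.cong) (simp_all add: mon_indep[OF Ekey])
      ultimately show "(\<Sum>n\<in>?n ` K. E n val * t ^ n) = 0" by simp
    qed
    then show ?thesis using that by blast
  qed
  show ?case
  proof
    fix i assume i: "i \<in> K"
    let ?K = "{j\<in>K. ?n j = ?n i}"
    have "\<forall>j\<in>?K. c j = 0"
    proof (rule insert.IH[where \<mu> = ?m])
      show "finite ?K" using insert.prems(1) by simp
      show "inj_on ?m ?K"
      proof (rule inj_onI)
        fix x y assume xy: "x \<in> ?K" "y \<in> ?K" "?m x = ?m y"
        have "\<mu> x = \<mu> y"
        proof (rule poly_mapping_eqI)
          fix u
          have "Poly_Mapping.lookup (?m x) u = Poly_Mapping.lookup (?m y) u"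
            using xy(3) by simp
          then show "Poly_Mapping.lookup (\<mu> x) u = Poly_Mapping.lookup (\<mu> y) u"
            using xy(1,2) by (cases "u = v") (auto simp: lookup_update)
        qed
        then show "x = y" using xy insert.prems(2) by (auto simp: inj_on_def)
      qed
      show "\<forall>j\<in>?K. Poly_Mapping.keys (?m j) \<subseteq> V"
        using insert.prems(3) by (auto simp: keys_update)
      show "\<forall>val. (\<Sum>j\<in>?K. c j * mon val (?m j)) = 0"
        using E0[of "?n i"] i unfolding E_def by auto
    qed
    then show "c i = 0" using i by simp
  qed
qed

lemma vanish:
  fixes p :: "'a::field_char_0 mpoly"
  assumes "\<And>val. peval id val p = 0"
  shows "p = 0"
proof -
  have "\<forall>m\<in>Poly_Mapping.keys p. Poly_Mapping.lookup p m = 0"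
  proof (rule vl_aux[where \<mu> = id and V = "\<Union>m\<in>Poly_Mapping.keys p. Poly_Mapping.keys m"])
    show "\<forall>val. (\<Sum>m\<in>Poly_Mapping.keys p. Poly_Mapping.lookup p m * mon val (id m)) = 0"
      using assms by (simp add: peval_def mon_def)
  qed auto
  then show ?thesis by (metis in_keys_iff poly_mapping_eqI lookup_zero)
qed


lemma mat_entry_eq: "(M :: 'b^2^2) = N \<longleftrightarrow> (\<forall>i j. M $ i $ j = N $ i $ j)"
  by (simp add: vec_eq_iff)

lemma mmult_entry: "((M :: 'b::semiring_1^2^2) ** N) $ i $ j = M $ i $ 1 * N $ 1 $ j + M $ i $ 2 * N $ 2 $ j"
  by (simp add: matrix_matrix_mult_def sum_2)

lemma matrix_add_rdistrib': "((A :: 'b::semiring_1^2^2) + B) ** (C :: 'b^2^2) = A ** C + B ** C"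
  by (simp add: mat_entry_eq mmult_entry algebra_simps)

lemma mscal_entry [simp]: "mscal c M $ i $ j = c * M $ i $ j"
  by (simp add: mscal_def)

lemma mscal_add: "mscal (a + b) (M::'b::semiring_1^2^2) = mscal a M + mscal b M"
  by (simp add: mat_entry_eq algebra_simps)

lemma mscal_zero [simp]: "mscal 0 (M::'b::semiring_1^2^2) = 0"
  by (simp add: mat_entry_eq)

lemma mscal_one [simp]: "mscal 1 (M::'b::semiring_1^2^2) = M"
  by (simp add: mat_entry_eq)

lemma mscal_mult: "mscal a (M::'b::comm_semiring_1^2^2) ** mscal b (N::'b^2^2) = mscal (a * b) (M ** N)"
  by (simp add: mat_entry_eq mmult_entry algebra_simps)

lemma letters_plus [simp]: "letters (u + v) = letters u @ letters v"
  by (simp add: plus_word_def)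

lemma letters_zero [simp]: "letters 0 = []"
  by (simp add: zero_word_def)

lemma mword_Cons: "mword A (Word (k # l)) = A k ** mword A (Word l)"
  by (simp add: mword_def)

lemma mword_Nil [simp]: "mword A (Word []) = mat 1"
  by (simp add: mword_def)

lemma mword_add: "mword A (u + v) = mword A u ** mword A v"
proof -
  have "foldr (\<lambda>k M. A k ** M) (l1 @ l2) (mat 1) = foldr (\<lambda>k M. A k ** M) l1 (mat 1) ** foldr (\<lambda>k M. A k ** M) l2 (mat 1)" for l1 l2
    by (induction l1) (simp_all add: matrix_mul_assoc)
  then show ?thesis by (simp add: mword_def)
qed

lemma qeval_psum: "qeval cf A P = psum (\<lambda>w c. mscal (cf c) (mword A w)) P"
  by (simp add: qeval_def psum_def)

context
  fixes cf :: "'a::comm_ring_1 mpoly \<Rightarrow> 'b::comm_ring_1"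
  assumes cf: "rhom cf"
begin

lemma qeval_add: "qeval cf A (P + Q) = qeval cf A P + qeval cf A Q"
  unfolding qeval_psum
proof (rule psum_add)
  fix k a b
  have "cf (a + b) = cf a + cf b" by (rule rhom_add[OF cf])
  then show "mscal (cf (a + b)) (mword A k) = mscal (cf a) (mword A k) + mscal (cf b) (mword A k)"
    by (simp add: mscal_add)
qed (simp add: rhom_zero[OF cf])

lemma qeval_mult: "qeval cf A (P * Q) = qeval cf A P ** qeval cf A Q"
  unfolding qeval_psum
proof (rule psum_mult[where mul="(**)"])
  fix k a b
  have "cf (a + b) = cf a + cf b" by (rule rhom_add[OF cf])
  then show "mscal (cf (a + b)) (mword A k) = mscal (cf a) (mword A k) + mscal (cf b) (mword A k)"
    by (simp add: mscal_add)
next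
  fix k l a b
  have "cf (a * b) = cf a * cf b" by (rule rhom_mult[OF cf])
  then show "mscal (cf (a * b)) (mword A (k + l)) = mscal (cf a) (mword A k) ** mscal (cf b) (mword A l)"
    by (simp add: mscal_mult mword_add)
qed (simp_all add: rhom_zero[OF cf] matrix_add_ldistrib matrix_add_rdistrib')

lemma qeval_single: "qeval cf A (Poly_Mapping.single w c) = mscal (cf c) (mword A w)"
  unfolding qeval_psum by (rule psum_single) (simp add: rhom_zero[OF cf])

lemma qeval_zero [simp]: "qeval cf A 0 = 0"
  by (simp add: qeval_def)

lemma qeval_uminus: "qeval cf A (- P) = - qeval cf A P"
  using qeval_add[of A P "-P"] add.inverse_unique[of "qeval cf A P" "qeval cf A (-P)"] by simp

lemma qeval_diff: "qeval cf A (P - Q) = qeval cf A P - qeval cf A Q"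
  using qeval_add[of A P "-Q"] qeval_uminus[of A Q] by simp

lemma qeval_sum: "qeval cf A (\<Sum>i\<in>I. f i) = (\<Sum>i\<in>I. qeval cf A (f i))"
  by (induction I rule: infinite_finite_induct) (simp_all add: qeval_add)

lemma qeval_qvar [simp]: "qeval cf A (qvar k) = A k"
  by (simp add: qvar_def qeval_single rhom_one[OF cf] mword_Cons)

lemma qeval_qconst [simp]: "qeval cf A (qconst c) = mscal (cf c) (mat 1)"
  by (simp add: qconst_def qeval_single)

lemma qeval_one [simp]: "qeval cf A 1 = mat 1"
proof -
  have "qeval cf A 1 = qeval cf A (Poly_Mapping.single 0 1)" by simp
  also have "\<dots> = mat 1" by (simp only: qeval_single) (simp add: rhom_one[OF cf] zero_word_def)
  finally show ?thesis .
qed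

end

lemma map_matrix_mult: "rhom h \<Longrightarrow> map_matrix h ((M :: 'a::comm_ring_1^2^2) ** (N :: 'a^2^2)) = map_matrix h M ** map_matrix h N"
  by (simp add: mat_entry_eq mmult_entry rhom_add rhom_mult)

lemma map_matrix_add: "rhom h \<Longrightarrow> map_matrix h ((M :: 'a::comm_ring_1^2^2) + N) = map_matrix h M + map_matrix h N"
  by (simp add: mat_entry_eq rhom_add)

lemma map_matrix_zero: "rhom h \<Longrightarrow> map_matrix h (0 :: 'a::comm_ring_1^2^2) = (0 :: 'b::comm_ring_1^2^2)"
  by (simp add: mat_entry_eq rhom_zero)

lemma map_matrix_sum: "rhom h \<Longrightarrow> map_matrix h (\<Sum>i\<in>I. (f i :: 'a::comm_ring_1^2^2)) = (\<Sum>i\<in>I. (map_matrix h (f i) :: 'b::comm_ring_1^2^2))"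
  by (induction I rule: infinite_finite_induct) (simp_all add: map_matrix_add map_matrix_zero)

lemma map_matrix_mscal: "rhom h \<Longrightarrow> map_matrix h (mscal c (M :: 'a::comm_ring_1^2^2)) = mscal (h c) (map_matrix h M)"
  by (simp add: mat_entry_eq rhom_mult)

lemma map_matrix_mat1: "rhom h \<Longrightarrow> map_matrix h (mat 1 :: 'a::comm_ring_1^2^2) = (mat 1 :: 'b::comm_ring_1^2^2)"
  by (simp add: mat_entry_eq mat_def rhom_one rhom_zero)

lemma map_matrix_mword:
  fixes A :: "nat \<Rightarrow> 'a::comm_ring_1^2^2" and h :: "'a \<Rightarrow> 'b::comm_ring_1"
  assumes h: "rhom h"
  shows "map_matrix h (mword A w) = mword (map_matrix h \<circ> A) w"
proof -
  have "map_matrix h (foldr (\<lambda>k M. A k ** M) l (mat 1)) = foldr (\<lambda>k M. (map_matrix h \<circ> A) k ** M) l (mat 1)" for l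
    by (induction l) (simp_all add: map_matrix_mat1[OF h] map_matrix_mult[OF h])
  then show ?thesis by (simp add: mword_def)
qed

lemma map_matrix_qeval:
  fixes A :: "nat \<Rightarrow> 'a::comm_ring_1^2^2" and h :: "'a \<Rightarrow> 'b::comm_ring_1"
  assumes h: "rhom h"
  shows "map_matrix h (qeval cf A H) = qeval (h \<circ> cf) (map_matrix h \<circ> A) H"
  by (simp add: qeval_def map_matrix_sum[OF h] map_matrix_mscal[OF h] map_matrix_mword[OF h])

lemma trace_map_matrix: "rhom h \<Longrightarrow> h (trace (M :: 'a::comm_ring_1^2^2)) = trace (map_matrix h M)"
  by (simp add: trace_def sum_2 rhom_add)


lemma Word_Nil_zero: "Word [] = 0" by (simp add: zero_word_def)

lemma qconst_add: "qconst (a + b) = qconst a + qconst (b :: 'a::comm_ring_1 mpoly)"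
  by (simp add: qconst_def single_add)
lemma qconst_mult: "qconst a * qconst b = qconst (a * b :: 'a::comm_ring_1 mpoly)"
  by (simp add: qconst_def mult_single Word_Nil_zero)
lemma qconst_zero [simp]: "qconst 0 = (0 :: 'a::comm_ring_1 qpoly)"
  by (simp add: qconst_def)
lemma qconst_one [simp]: "qconst 1 = (1 :: 'a::comm_ring_1 qpoly)"
  by (simp add: qconst_def Word_Nil_zero)
lemma rhom_qconst: "rhom (qconst :: 'a::comm_ring_1 mpoly \<Rightarrow> 'a qpoly)"
  by (simp add: rhom_def qconst_add qconst_mult)
lemma qconst_uminus: "qconst (- a) = - qconst (a :: 'a::comm_ring_1 mpoly)"
  by (rule rhom_uminus[OF rhom_qconst])
lemma qconst_diff: "qconst (a - b) = qconst a - qconst (b :: 'a::comm_ring_1 mpoly)"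
  by (rule rhom_diff[OF rhom_qconst])

lemma qconst_central: "qconst c * P = P * qconst (c :: 'a::comm_ring_1 mpoly)"
proof -
  have "qconst c * Poly_Mapping.single w d = Poly_Mapping.single w d * qconst c" for w d
    by (simp add: qconst_def mult_single Word_Nil_zero mult.commute)
  then show ?thesis
    by (subst (1 2) pm_expand) (simp add: sum_distrib_left sum_distrib_right)
qed

definition gsig :: "(nat \<Rightarrow> 'a::comm_ring_1 qpoly) \<Rightarrow> evar \<Rightarrow> 'a mpoly" where
  "gsig \<sigma> = (\<lambda>(k, i, j). generic_eval (\<sigma> k) $ i $ j)"

definition phis :: "(nat \<Rightarrow> 'a::comm_ring_1 qpoly) \<Rightarrow> 'a mpoly \<Rightarrow> 'a mpoly" where
  "phis \<sigma> = peval pconst (gsig \<sigma>)"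

lemma rhom_phis: "rhom (phis \<sigma>)"
  unfolding phis_def by (rule rhom_peval[OF rhom_pconst])

lemma qsubst_psum: "qsubst \<sigma> P = psum (\<lambda>w c. qconst (phis \<sigma> c) * prod_list (map \<sigma> (letters w))) P"
  by (simp add: qsubst_def psum_def phis_def gsig_def)

lemma qsubst_add: "qsubst \<sigma> (P + Q) = qsubst \<sigma> P + qsubst \<sigma> Q"
  unfolding qsubst_psum
  by (rule psum_add) (simp_all add: rhom_zero[OF rhom_phis] rhom_add[OF rhom_phis] qconst_add distrib_right)

lemma qsubst_mult: "qsubst \<sigma> (P * Q) = qsubst \<sigma> P * qsubst \<sigma> Q"
  unfolding qsubst_psum
proof (rule psum_mult[where mul="(*)"])
  fix k l and a b :: "'a::comm_ring_1 mpoly"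
  let ?pl = "\<lambda>w. prod_list (map \<sigma> (letters w))"
  have "qconst (phis \<sigma> (a * b)) * ?pl (k + l) = qconst (phis \<sigma> a) * (qconst (phis \<sigma> b) * ?pl k) * ?pl l"
    by (simp add: rhom_mult[OF rhom_phis] qconst_mult[symmetric] mult.assoc)
  also have "\<dots> = qconst (phis \<sigma> a) * (?pl k * qconst (phis \<sigma> b)) * ?pl l"
    by (simp add: qconst_central)
  finally show "qconst (phis \<sigma> (a * b)) * ?pl (k + l) = qconst (phis \<sigma> a) * ?pl k * (qconst (phis \<sigma> b) * ?pl l)"
    by (simp add: mult.assoc)
qed (simp_all add: rhom_zero[OF rhom_phis] rhom_add[OF rhom_phis] qconst_add distrib_right distrib_left)

lemma qsubst_single: "qsubst \<sigma> (Poly_Mapping.single w c) = qconst (phis \<sigma> c) * prod_list (map \<sigma> (letters w))"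
  unfolding qsubst_psum by (rule psum_single) (simp add: rhom_zero[OF rhom_phis])

lemma qsubst_qvar [simp]: "qsubst \<sigma> (qvar k) = \<sigma> k"
  by (simp add: qvar_def qsubst_single rhom_one[OF rhom_phis])

lemma qsubst_qconst [simp]: "qsubst \<sigma> (qconst c) = qconst (phis \<sigma> c)"
  by (simp add: qconst_def qsubst_single)

lemma rhom_qsubst: "rhom (qsubst \<sigma>)"
proof -
  have "qsubst \<sigma> 1 = 1" using qsubst_qconst[of \<sigma> 1] by (simp add: rhom_one[OF rhom_phis])
  then show ?thesis by (simp add: rhom_def qsubst_add qsubst_mult)
qed

lemma mscal_mat1: "mscal c (mat 1) ** (M :: 'b::comm_ring_1^2^2) = mscal c M"
  by (simp add: mat_entry_eq forall_2 mmult_entry mat_def)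

lemma qeval_prod_list:
  assumes cf: "rhom cf"
  shows "qeval cf A (prod_list (map \<sigma> l)) = mword (qeval cf A \<circ> \<sigma>) (Word l)"
  by (induction l) (simp_all add: qeval_mult[OF cf] qeval_one[OF cf] mword_Cons)

lemma geval_qsubst: "generic_eval (qsubst \<sigma> H) = qeval (phis \<sigma>) (generic_eval \<circ> \<sigma>) H"
proof -
  have "qsubst \<sigma> H = (\<Sum>w\<in>Poly_Mapping.keys H.
          qconst (phis \<sigma> (Poly_Mapping.lookup H w)) * prod_list (map \<sigma> (letters w)))"
    by (simp add: qsubst_def phis_def gsig_def)
  then have "generic_eval (qsubst \<sigma> H) = (\<Sum>w\<in>Poly_Mapping.keys H.
          generic_eval (qconst (phis \<sigma> (Poly_Mapping.lookup H w)) * prod_list (map \<sigma> (letters w))))"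
    by (simp add: generic_eval_def qeval_sum[OF rhom_id])
  also have "\<dots> = qeval (phis \<sigma>) (generic_eval \<circ> \<sigma>) H"
    unfolding qeval_def[of "phis \<sigma>" "generic_eval \<circ> \<sigma>" H]
    by (rule sum.cong) (simp_all add: generic_eval_def[abs_def] qeval_mult[OF rhom_id] qeval_prod_list[OF rhom_id] qeval_qconst[OF rhom_id] mscal_mat1)
  finally show ?thesis .
qed

lemma map_phis_generic: "map_matrix (phis \<sigma>) \<circ> generic_matrix = generic_eval \<circ> \<sigma>"
  by (simp add: fun_eq_iff mat_entry_eq generic_matrix_def phis_def peval_pvar[OF rhom_pconst] gsig_def)

lemma qsubst_qtr: "qsubst \<sigma> (qtr H) = qtr (qsubst \<sigma> H)"
proof -
  have "phis \<sigma> (trace (generic_eval H)) = trace (map_matrix (phis \<sigma>) (generic_eval H))"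
    by (rule trace_map_matrix[OF rhom_phis])
  also have "\<dots> = trace (qeval (phis \<sigma> \<circ> id) (map_matrix (phis \<sigma>) \<circ> generic_matrix) H)"
    unfolding generic_eval_def by (simp add: map_matrix_qeval[OF rhom_phis])
  also have "\<dots> = trace (generic_eval (qsubst \<sigma> H))"
    by (simp add: map_phis_generic geval_qsubst)
  finally show ?thesis by (simp add: qtr_def)
qed

lemma qsubst_Q2: "qsubst \<sigma> (Q2 a b) = Q2 (qsubst \<sigma> a) (qsubst \<sigma> b)"
  by (simp add: Q2_def rhom_diff[OF rhom_qsubst] rhom_add[OF rhom_qsubst] rhom_mult[OF rhom_qsubst] qsubst_qtr)

definition valAB :: "'b^2^2 \<Rightarrow> 'b^2^2 \<Rightarrow> evar \<Rightarrow> 'b" where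
  "valAB A B = (\<lambda>(k, i, j). assign2 A B k $ i $ j)"

definition EAB :: "'b::field^2^2 \<Rightarrow> 'b^2^2 \<Rightarrow> 'b qpoly \<Rightarrow> 'b^2^2" where
  "EAB A B = qeval (peval id (valAB A B)) (assign2 A B)"

lemma quasi_identity_EAB: "quasi_identity_M2 P \<longleftrightarrow> (\<forall>A B. EAB A B P = 0)"
  by (simp add: quasi_identity_M2_def EAB_def valAB_def)

lemma rhom_cfAB: "rhom (peval id (valAB A B))"
  by (rule rhom_peval[OF rhom_id])

lemma EAB_add: "EAB A B (P + Q) = EAB A B P + EAB A B Q"
  unfolding EAB_def by (rule qeval_add[OF rhom_cfAB])
lemma EAB_diff: "EAB A B (P - Q) = EAB A B P - EAB A B Q"
  unfolding EAB_def by (rule qeval_diff[OF rhom_cfAB])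
lemma EAB_mult: "EAB A B (P * Q) = EAB A B P ** EAB A B Q"
  unfolding EAB_def by (rule qeval_mult[OF rhom_cfAB])
lemma EAB_qvar0 [simp]: "EAB A B (qvar 0) = A"
  unfolding EAB_def by (simp add: qeval_qvar[OF rhom_cfAB] assign2_def)
lemma EAB_qvar1 [simp]: "EAB A B (qvar 1) = B"
  unfolding EAB_def by (simp add: qeval_qvar[OF rhom_cfAB] assign2_def)
lemma EAB_qconst: "EAB A B (qconst c) = mscal (peval id (valAB A B) c) (mat 1)"
  unfolding EAB_def by (rule qeval_qconst[OF rhom_cfAB])

lemma EAB_qtr: "EAB A B (qtr H) = mscal (trace (EAB A B H)) (mat 1)"
proof -
  have "map_matrix (peval id (valAB A B)) \<circ> generic_matrix = assign2 A B"
    by (simp add: fun_eq_iff mat_entry_eq generic_matrix_def peval_pvar[OF rhom_id] valAB_def)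
  then have "peval id (valAB A B) (trace (generic_eval H)) = trace (EAB A B H)"
    unfolding generic_eval_def EAB_def
    by (simp add: trace_map_matrix[OF rhom_cfAB] map_matrix_qeval[OF rhom_cfAB])
  then show ?thesis by (simp add: qtr_def EAB_qconst)
qed

lemma CH2:
  fixes M N :: "'b::comm_ring_1^2^2"
  shows "M ** N + N ** M - mscal (trace M) (mat 1) ** N - mscal (trace N) (mat 1) ** M
     + mscal (trace M) (mat 1) ** mscal (trace N) (mat 1) - mscal (trace (M ** N)) (mat 1) = 0"
  by (simp add: mat_entry_eq forall_2 mmult_entry mat_def trace_def sum_2 algebra_simps)

lemma EAB_Q2: "EAB A B (Q2 H1 H2) = 0"
  unfolding Q2_def
  by (simp add: EAB_add EAB_diff EAB_mult EAB_qtr CH2)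


definition Zs :: "'a::field_char_0 qpoly \<Rightarrow> bool" where
  "Zs p \<longleftrightarrow> p \<in> T_ideal {Q2 (qvar 0) (qvar 1)} \<and> (\<forall>A B. EAB A B p = 0)"

lemma Zs_zero: "Zs 0"
  by (simp add: Zs_def T_ideal.zero EAB_def qeval_def)

lemma Zs_add: "Zs p \<Longrightarrow> Zs q \<Longrightarrow> Zs (p + q)"
  by (simp add: Zs_def T_ideal.add EAB_add)

lemma Zs_mult_left: "Zs p \<Longrightarrow> Zs (a * p)"
  by (simp add: Zs_def T_ideal.mult_left EAB_mult)

lemma Zs_mult_right: "Zs p \<Longrightarrow> Zs (p * a)"
  by (simp add: Zs_def T_ideal.mult_right EAB_mult)

lemma Zs_uminus: "Zs p \<Longrightarrow> Zs (- p)"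
  using Zs_mult_left[of p "-1"] by simp

lemma Zs_diff: "Zs p \<Longrightarrow> Zs q \<Longrightarrow> Zs (p - q)"
  using Zs_add[of p "-q"] Zs_uminus[of q] by simp

lemma Zs_G1: "Zs (Q2 (qvar 0) (qvar 1))"
  by (simp add: Zs_def T_ideal.gen EAB_Q2)

lemma Zs_G2: "Zs (Q2 (qvar 0) (qvar 0 :: 'a::field_char_0 qpoly))"
proof -
  have e: "qsubst (\<lambda>_. qvar 0) (Q2 (qvar 0) (qvar 1)) = (Q2 (qvar 0) (qvar 0) :: 'a qpoly)"
    by (simp only: qsubst_Q2 qsubst_qvar)
  have "qsubst (\<lambda>_. qvar 0) (Q2 (qvar 0) (qvar 1)) \<in> T_ideal {Q2 (qvar 0) (qvar 1 :: 'a qpoly)}"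
    by (rule T_ideal.subst[OF T_ideal.gen]) simp
  then have "Q2 (qvar 0) (qvar 0) \<in> T_ideal {Q2 (qvar 0) (qvar 1 :: 'a qpoly)}"
    by (simp only: e)
  then show ?thesis by (simp add: Zs_def EAB_Q2)
qed

lemma Zs_G3: "Zs (Q2 (qvar 1) (qvar 1 :: 'a::field_char_0 qpoly))"
proof -
  have e: "qsubst (\<lambda>_. qvar 1) (Q2 (qvar 0) (qvar 1)) = (Q2 (qvar 1) (qvar 1) :: 'a qpoly)"
    by (simp only: qsubst_Q2 qsubst_qvar)
  have "qsubst (\<lambda>_. qvar 1) (Q2 (qvar 0) (qvar 1)) \<in> T_ideal {Q2 (qvar 0) (qvar 1 :: 'a qpoly)}"
    by (rule T_ideal.subst[OF T_ideal.gen]) simp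
  then have "Q2 (qvar 1) (qvar 1) \<in> T_ideal {Q2 (qvar 0) (qvar 1 :: 'a qpoly)}"
    by (simp only: e)
  then show ?thesis by (simp add: Zs_def EAB_Q2)
qed

definition NF :: "'a::field_char_0 mpoly \<Rightarrow> 'a mpoly \<Rightarrow> 'a mpoly \<Rightarrow> 'a mpoly \<Rightarrow> 'a qpoly" where
  "NF a b c d = qconst a + qconst b * qvar 0 + qconst c * qvar 1 + qconst d * (qvar 0 * qvar 1)"

definition Good :: "'a::field_char_0 qpoly \<Rightarrow> bool" where
  "Good p \<longleftrightarrow> (\<exists>a b c d. Zs (p - NF a b c d))"

lemma Good_NF: "Good (NF a b c d)"
  unfolding Good_def using Zs_zero
  by (intro exI[of _ a] exI[of _ b] exI[of _ c] exI[of _ d]) simp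

lemma Good_Zs: "Zs (p - q) \<Longrightarrow> Good q \<Longrightarrow> Good p"
proof -
  assume pq: "Zs (p - q)" and "Good q"
  then obtain a b c d where q: "Zs (q - NF a b c d)" unfolding Good_def by blast
  have "(p - q) + (q - NF a b c d) = p - NF a b c d" by (simp add: algebra_simps)
  then have "Zs (p - NF a b c d)" using Zs_add[OF pq q] by (simp only:)
  then show ?thesis unfolding Good_def by blast
qed

lemma Good_add: "Good p \<Longrightarrow> Good q \<Longrightarrow> Good (p + q)"
proof -
  assume "Good p" "Good q"
  then obtain a b c d a' b' c' d' where "Zs (p - NF a b c d)" "Zs (q - NF a' b' c' d')"
    unfolding Good_def by blast
  then have "Zs ((p + q) - NF (a + a') (b + b') (c + c') (d + d'))"
  proof -
    have "(p + q) - NF (a + a') (b + b') (c + c') (d + d') = (p - NF a b c d) + (q - NF a' b' c' d')"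
      by (simp add: NF_def qconst_add distrib_right)
    then show ?thesis using Zs_add[OF \<open>Zs (p - NF a b c d)\<close> \<open>Zs (q - NF a' b' c' d')\<close>] by (simp only:)
  qed
  then show ?thesis unfolding Good_def by blast
qed

lemma Good_scal: "Good p \<Longrightarrow> Good (qconst e * p)"
proof -
  assume "Good p"
  then obtain a b c d where "Zs (p - NF a b c d)"
    unfolding Good_def by blast
  then have "Zs (qconst e * (p - NF a b c d))" by (rule Zs_mult_left)
  then have "Zs (qconst e * p - NF (e * a) (e * b) (e * c) (e * d))"
    by (simp add: NF_def qconst_mult[symmetric] right_diff_distrib distrib_left mult.assoc)
  then show ?thesis unfolding Good_def by blast
qed

lemma Good_uminus: "Good p \<Longrightarrow> Good (- p)"
  using Good_scal[of p "-1"] by (simp add: qconst_uminus)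

lemma Good_diff: "Good p \<Longrightarrow> Good q \<Longrightarrow> Good (p - q)"
  using Good_add[of p "-q"] Good_uminus[of q] by simp

lemma Good_zero: "Good 0"
  using Good_NF[of 0 0 0 0] by (simp add: NF_def)

lemma qvar_qconst: "qvar k * qconst c = qconst c * qvar k"
  by (rule qconst_central[symmetric])

lemma qvar_qconst2: "qvar k * (qconst c * p) = qconst c * (qvar k * p)"
  by (simp add: mult.assoc[symmetric] qvar_qconst)

lemma qconst_qconst2: "qconst a * (qconst b * p) = qconst (a * b) * p"
  by (simp add: mult.assoc[symmetric] qconst_mult)


lemma NF_mult_right: "NF a b c d * z = qconst a * z + qconst b * (qvar 0 * z) + qconst c * (qvar 1 * z) + qconst d * (qvar 0 * (qvar 1 * z))"
  by (simp add: NF_def distrib_right mult.assoc)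

lemma qvar_NF: "qvar k * NF a b c d = qconst a * qvar k + qconst b * (qvar k * qvar 0) + qconst c * (qvar k * qvar 1) + qconst d * (qvar k * (qvar 0 * qvar 1))"
  by (simp add: NF_def distrib_left mult.assoc[symmetric] qvar_qconst)

lemma scal_NF: "qconst e * NF a b c d = NF (e * a) (e * b) (e * c) (e * d)"
  by (simp add: NF_def distrib_left mult.assoc qconst_mult qconst_qconst2)

lemma half_double: "qconst (pconst (1/2)) * (p + p) = (p :: 'a::field_char_0 qpoly)"
proof -
  have "pconst (1/2) + pconst (1/2) = (pconst (1/2 + 1/2) :: 'a mpoly)"
    by (rule rhom_add[OF rhom_pconst, symmetric])
  also have "(1/2 + 1/2 :: 'a) = 1" by simp
  finally have "pconst (1/2) + pconst (1/2) = (1 :: 'a mpoly)"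
    by (simp only: rhom_one[OF rhom_pconst])
  then have h: "qconst (pconst (1/2)) + qconst (pconst (1/2)) = (1 :: 'a qpoly)"
    unfolding qconst_add[symmetric] by (simp only: qconst_one)
  have "qconst (pconst (1/2)) * (p + p) = (qconst (pconst (1/2)) + qconst (pconst (1/2))) * p"
    by (simp only: distrib_left distrib_right)
  then show ?thesis by (simp only: h mult_1)
qed


lemma Good_qx: "Good (qconst a * qvar 0)"
  using Good_NF[of 0 a 0 0] by (simp add: NF_def)
lemma Good_qy: "Good (qconst a * qvar 1)"
  using Good_NF[of 0 0 a 0] by (simp add: NF_def)
lemma Good_xy: "Good (qvar 0 * qvar 1)"
  using Good_NF[of 0 0 0 1] by (simp add: NF_def)

lemma Zsq:
  fixes z :: "'a::field_char_0 qpoly"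
  assumes "Zs (Q2 z z)"
  shows "\<exists>a b. Zs (z * z - (qconst a + qconst b * z))"
proof -
  define tz where "tz = trace (generic_eval z)"
  define tzz where "tzz = trace (generic_eval (z * z))"
  have 1: "qconst (tzz - tz * tz) = qconst tzz - qconst tz * qconst tz"
    by (simp only: qconst_diff qconst_mult)
  have 2: "qconst (tz + tz) * z = qconst tz * z + qconst tz * z"
    by (simp only: qconst_add distrib_right)
  have q: "Q2 z z = z * z + z * z - qconst tz * z - qconst tz * z + qconst tz * qconst tz - qconst tzz"
    by (simp only: Q2_def qtr_def tz_def[symmetric] tzz_def[symmetric])
  have e: "z * z + z * z - (qconst (tzz - tz * tz) + qconst (tz + tz) * z) = Q2 z z"
    unfolding q 1 2 by (simp add: algebra_simps)
  have "Zs (z * z + z * z - (qconst (tzz - tz * tz) + qconst (tz + tz) * z))"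
    unfolding e by (rule assms)
  then have "Zs (qconst (pconst (1/2)) * (z * z + z * z - (qconst (tzz - tz * tz) + qconst (tz + tz) * z)))"
    by (rule Zs_mult_left)
  moreover have "qconst (pconst (1/2)) * (z * z + z * z - (qconst (tzz - tz * tz) + qconst (tz + tz) * z))
     = z * z - qconst (pconst (1/2)) * (qconst (tzz - tz * tz) + qconst (tz + tz) * z)"
    by (simp only: right_diff_distrib half_double)
  moreover have "qconst (pconst (1/2)) * (qconst (tzz - tz * tz) + qconst (tz + tz) * z)
     = qconst (pconst (1/2) * (tzz - tz * tz)) + qconst (pconst (1/2) * (tz + tz)) * z"
    by (simp only: distrib_left mult.assoc[symmetric] qconst_mult)
  ultimately have "Zs (z * z - (qconst (pconst (1/2) * (tzz - tz * tz)) + qconst (pconst (1/2) * (tz + tz)) * z))"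
    by (simp only:)
  then show ?thesis by blast
qed

lemma ZXX: "\<exists>a b. Zs (qvar 0 * qvar 0 - NF a b 0 0 :: 'a::field_char_0 qpoly)"
proof -
  obtain a b where h: "Zs (qvar 0 * qvar 0 - (qconst a + qconst b * qvar 0) :: 'a qpoly)"
    using Zsq[OF Zs_G2] by blast
  have e: "NF a b 0 0 = (qconst a + qconst b * qvar 0 :: 'a qpoly)" by (simp add: NF_def)
  have "Zs (qvar 0 * qvar 0 - NF a b 0 0 :: 'a qpoly)" unfolding e by (rule h)
  then show ?thesis by blast
qed

lemma ZYY: "\<exists>a c. Zs (qvar 1 * qvar 1 - NF a 0 c 0 :: 'a::field_char_0 qpoly)"
proof -
  obtain a b where h: "Zs (qvar 1 * qvar 1 - (qconst a + qconst b * qvar 1) :: 'a qpoly)"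
    using Zsq[OF Zs_G3] by blast
  have e: "NF a 0 b 0 = (qconst a + qconst b * qvar 1 :: 'a qpoly)" by (simp add: NF_def)
  have "Zs (qvar 1 * qvar 1 - NF a 0 b 0 :: 'a qpoly)" unfolding e by (rule h)
  then show ?thesis by blast
qed

lemma ZYX: "\<exists>a b c d. Zs (qvar 1 * qvar 0 - NF a b c d :: 'a::field_char_0 qpoly)"
proof -
  let ?x = "qvar 0 :: 'a qpoly" and ?y = "qvar 1 :: 'a qpoly"
  let ?tX = "trace (generic_eval ?x)" and ?tY = "trace (generic_eval ?y)" and ?tXY = "trace (generic_eval (?x * ?y))"
  have e: "?y * ?x - NF (?tXY - ?tX * ?tY) ?tY ?tX (-1) = Q2 ?x ?y"
    by (simp add: Q2_def qtr_def NF_def qconst_add qconst_diff qconst_mult qconst_uminus algebra_simps)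
  have "Zs (?y * ?x - NF (?tXY - ?tX * ?tY) ?tY ?tX (-1))"
    unfolding e by (rule Zs_G1)
  then show ?thesis by blast
qed


lemma Good_from_Zs: "Zs (p - NF a b c d) \<Longrightarrow> Good p"
  using Good_Zs Good_NF by blast

lemma Good_xx: "Good (qvar 0 * qvar 0 :: 'a::field_char_0 qpoly)"
  using ZXX Good_from_Zs by blast
lemma Good_yy: "Good (qvar 1 * qvar 1 :: 'a::field_char_0 qpoly)"
  using ZYY Good_from_Zs by blast
lemma Good_yx: "Good (qvar 1 * qvar 0 :: 'a::field_char_0 qpoly)"
  using ZYX Good_from_Zs by blast

lemma Good_add4: "Good p1 \<Longrightarrow> Good p2 \<Longrightarrow> Good p3 \<Longrightarrow> Good p4 \<Longrightarrow> Good (p1 + p2 + p3 + p4)"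
  using Good_add by blast

lemma Good_xxy: "Good (qvar 0 * qvar 0 * qvar 1 :: 'a::field_char_0 qpoly)"
proof -
  obtain a b where h: "Zs (qvar 0 * qvar 0 - NF a b 0 0 :: 'a qpoly)" using ZXX by blast
  have "Zs ((qvar 0 * qvar 0 - NF a b 0 0) * qvar 1 :: 'a qpoly)" using h by (rule Zs_mult_right)
  moreover have "(qvar 0 * qvar 0 - NF a b 0 0) * qvar 1 = (qvar 0 * qvar 0 * qvar 1 - NF 0 0 a b :: 'a qpoly)"
    by (simp add: left_diff_distrib NF_def distrib_right mult.assoc)
  ultimately show ?thesis using Good_from_Zs by metis
qed

lemma Good_xyx: "Good (qvar 0 * (qvar 1 * qvar 0) :: 'a::field_char_0 qpoly)"
proof -
  obtain a b c d where h: "Zs (qvar 1 * qvar 0 - NF a b c d :: 'a qpoly)" using ZYX by blast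
  have z: "Zs (qvar 0 * (qvar 1 * qvar 0 - NF a b c d) :: 'a qpoly)" using h by (rule Zs_mult_left)
  have e: "qvar 0 * (qvar 1 * qvar 0 - NF a b c d) = (qvar 0 * (qvar 1 * qvar 0) - qvar 0 * NF a b c d :: 'a qpoly)"
    by (rule right_diff_distrib)
  have g: "Good (qvar 0 * NF a b c d :: 'a qpoly)"
    unfolding qvar_NF
  proof (intro Good_add4)
    show "Good (qconst a * qvar 0 :: 'a qpoly)" by (rule Good_qx)
    show "Good (qconst b * (qvar 0 * qvar 0) :: 'a qpoly)" by (rule Good_scal[OF Good_xx])
    show "Good (qconst c * (qvar 0 * qvar 1) :: 'a qpoly)" by (rule Good_scal[OF Good_xy])
    show "Good (qconst d * (qvar 0 * (qvar 0 * qvar 1)) :: 'a qpoly)"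
      using Good_scal[OF Good_xxy] by (simp only: mult.assoc)
  qed
  show ?thesis using z unfolding e using Good_Zs g by blast
qed

lemma Good_xyy: "Good (qvar 0 * (qvar 1 * qvar 1) :: 'a::field_char_0 qpoly)"
proof -
  obtain a c where h: "Zs (qvar 1 * qvar 1 - NF a 0 c 0 :: 'a qpoly)" using ZYY by blast
  have z: "Zs (qvar 0 * (qvar 1 * qvar 1 - NF a 0 c 0) :: 'a qpoly)" using h by (rule Zs_mult_left)
  have e: "qvar 0 * (qvar 1 * qvar 1 - NF a 0 c 0) = (qvar 0 * (qvar 1 * qvar 1) - NF 0 a 0 c :: 'a qpoly)"
    by (simp add: right_diff_distrib NF_def distrib_left qvar_qconst qvar_qconst2)
  show ?thesis using z unfolding e using Good_from_Zs by blast
qed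

lemma Good_NF_x: "Good (NF a b c d * qvar 0 :: 'a::field_char_0 qpoly)"
  unfolding NF_mult_right
  by (intro Good_add4 Good_qx Good_scal Good_xx Good_yx Good_xyx)

lemma Good_NF_y: "Good (NF a b c d * qvar 1 :: 'a::field_char_0 qpoly)"
  unfolding NF_mult_right
  by (intro Good_add4 Good_qy Good_scal Good_xy Good_yy Good_xyy)

lemma Good_mult_var:
  assumes "Good (p :: 'a::field_char_0 qpoly)" "k \<in> {0, 1}"
  shows "Good (p * qvar k)"
proof -
  obtain a b c d where h: "Zs (p - NF a b c d)" using assms(1) unfolding Good_def by blast
  have "Zs ((p - NF a b c d) * qvar k)" using h by (rule Zs_mult_right)
  then have z: "Zs (p * qvar k - NF a b c d * qvar k)" by (simp only: left_diff_distrib)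
  have "Good (NF a b c d * qvar k)" using assms(2) Good_NF_x Good_NF_y by auto
  then show ?thesis using z Good_Zs by blast
qed

lemma Good_one: "Good (1 :: 'a::field_char_0 qpoly)"
proof -
  have e: "NF 1 0 0 0 = (1 :: 'a qpoly)" by (simp add: NF_def)
  have "Good (NF 1 0 0 0 :: 'a qpoly)" by (rule Good_NF)
  then show ?thesis unfolding e .
qed

lemma Good_word:
  "set l \<subseteq> {0, 1} \<Longrightarrow> Good (Poly_Mapping.single (Word l) (1 :: 'a::field_char_0 mpoly))"
proof (induction l rule: rev_induct)
  case Nil
  have "Poly_Mapping.single (Word []) (1 :: 'a mpoly) = 1" by (simp add: Word_Nil_zero)
  then show ?case using Good_one by simp
next
  case (snoc k l)
  have "Poly_Mapping.single (Word (l @ [k])) (1 :: 'a mpoly) = Poly_Mapping.single (Word l) 1 * qvar k"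
    by (simp add: qvar_def mult_single plus_word_def)
  moreover have "Good (Poly_Mapping.single (Word l) (1 :: 'a mpoly))" using snoc by simp
  ultimately show ?case using Good_mult_var snoc.prems by auto
qed

lemma Good_sum: "(\<And>i. i \<in> I \<Longrightarrow> Good (f i)) \<Longrightarrow> Good (\<Sum>i\<in>I. f i)"
  by (induction I rule: infinite_finite_induct) (auto intro: Good_zero Good_add)

lemma Good_P:
  assumes "two_var_qpoly (P :: 'a::field_char_0 qpoly)"
  shows "Good P"
proof -
  have "P = (\<Sum>w\<in>Poly_Mapping.keys P. Poly_Mapping.single w (Poly_Mapping.lookup P w))"
    by (rule pm_expand)
  also have "\<dots> = (\<Sum>w\<in>Poly_Mapping.keys P. qconst (Poly_Mapping.lookup P w) * Poly_Mapping.single (Word (letters w)) 1)"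
    by (rule sum.cong) (simp_all add: qconst_def mult_single Word_Nil_zero)
  finally have e: "P = \<dots>" .
  show ?thesis
    apply (subst e)
    apply (rule Good_sum)
    apply (rule Good_scal)
    apply (rule Good_word)
    using assms unfolding two_var_qpoly_def by auto
qed


definition det3 :: "'b::comm_ring_1 \<Rightarrow> 'b \<Rightarrow> 'b \<Rightarrow> 'b \<Rightarrow> 'b \<Rightarrow> 'b \<Rightarrow> 'b \<Rightarrow> 'b \<Rightarrow> 'b \<Rightarrow> 'b" where
  "det3 m11 m12 m13 m21 m22 m23 m31 m32 m33 =
     m11 * (m22 * m33 - m23 * m32) - m12 * (m21 * m33 - m23 * m31) + m13 * (m21 * m32 - m22 * m31)"

lemma cramer3:
  fixes m11 m12 m13 m21 m22 m23 m31 m32 m33 u v w :: "'b::comm_ring_1"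
  assumes e1: "m11 * u + m12 * v + m13 * w = 0"
      and e2: "m21 * u + m22 * v + m23 * w = 0"
      and e3: "m31 * u + m32 * v + m33 * w = 0"
  shows "det3 m11 m12 m13 m21 m22 m23 m31 m32 m33 * u = 0 \<and>
         det3 m11 m12 m13 m21 m22 m23 m31 m32 m33 * v = 0 \<and>
         det3 m11 m12 m13 m21 m22 m23 m31 m32 m33 * w = 0"
proof -
  let ?E1 = "m11 * u + m12 * v + m13 * w" and ?E2 = "m21 * u + m22 * v + m23 * w"
    and ?E3 = "m31 * u + m32 * v + m33 * w"
  have "det3 m11 m12 m13 m21 m22 m23 m31 m32 m33 * u =
    (m22 * m33 - m23 * m32) * ?E1 + (m13 * m32 - m12 * m33) * ?E2 + (m12 * m23 - m13 * m22) * ?E3"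
    by (simp add: det3_def algebra_simps)
  moreover have "det3 m11 m12 m13 m21 m22 m23 m31 m32 m33 * v =
    (m23 * m31 - m21 * m33) * ?E1 + (m11 * m33 - m13 * m31) * ?E2 + (m13 * m21 - m11 * m23) * ?E3"
    by (simp add: det3_def algebra_simps)
  moreover have "det3 m11 m12 m13 m21 m22 m23 m31 m32 m33 * w =
    (m21 * m32 - m22 * m31) * ?E1 + (m12 * m31 - m11 * m32) * ?E2 + (m11 * m22 - m12 * m21) * ?E3"
    by (simp add: det3_def algebra_simps)
  ultimately show ?thesis using e1 e2 e3 by simp
qed

definition Dfun :: "'b::comm_ring_1^2^2 \<Rightarrow> 'b^2^2 \<Rightarrow> 'b" where
  "Dfun A B = det3 (A$1$2) (B$1$2) ((A ** B)$1$2) (A$2$1) (B$2$1) ((A ** B)$2$1)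
      (A$1$1 - A$2$2) (B$1$1 - B$2$2) ((A ** B)$1$1 - (A ** B)$2$2)"

lemma rhom_det3: "rhom h \<Longrightarrow> h (det3 m11 m12 m13 m21 m22 m23 m31 m32 m33) =
   det3 (h m11) (h m12) (h m13) (h m21) (h m22) (h m23) (h m31) (h m32) (h m33)"
  by (simp add: det3_def rhom_simps)

lemma rhom_Dfun:
  fixes A B :: "'a::comm_ring_1^2^2" and h :: "'a \<Rightarrow> 'b::comm_ring_1"
  assumes h: "rhom h"
  shows "h (Dfun A B) = Dfun (map_matrix h A) (map_matrix h B)"
  unfolding Dfun_def rhom_det3[OF h] map_matrix_mult[OF h, symmetric]
  by (simp add: rhom_diff[OF h])

lemma pointwise:
  fixes A B :: "'b::comm_ring_1^2^2"
  assumes "mscal a (mat 1) + mscal b A + mscal c B + mscal d (A ** B) = 0"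
  shows "Dfun A B * a = 0 \<and> Dfun A B * b = 0 \<and> Dfun A B * c = 0 \<and> Dfun A B * d = 0"
proof -
  let ?C = "A ** B"
  have ent: "(mscal a (mat 1) + mscal b A + mscal c B + mscal d ?C) $ i $ j = 0" for i j
    using assms by simp
  have e12: "A$1$2 * b + B$1$2 * c + ?C$1$2 * d = 0"
    using ent[of 1 2] by (simp add: mat_def algebra_simps)
  have e21: "A$2$1 * b + B$2$1 * c + ?C$2$1 * d = 0"
    using ent[of 2 1] by (simp add: mat_def algebra_simps)
  have e11: "a + b * A$1$1 + c * B$1$1 + d * ?C$1$1 = 0"
    using ent[of 1 1] by (simp add: mat_def)
  have e22: "a + b * A$2$2 + c * B$2$2 + d * ?C$2$2 = 0"
    using ent[of 2 2] by (simp add: mat_def)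
  have e3: "(A$1$1 - A$2$2) * b + (B$1$1 - B$2$2) * c + (?C$1$1 - ?C$2$2) * d = 0"
  proof -
    have "(A$1$1 - A$2$2) * b + (B$1$1 - B$2$2) * c + (?C$1$1 - ?C$2$2) * d =
       (a + b * A$1$1 + c * B$1$1 + d * ?C$1$1) - (a + b * A$2$2 + c * B$2$2 + d * ?C$2$2)"
      by (simp add: algebra_simps)
    then show ?thesis using e11 e22 by simp
  qed
  have cr: "Dfun A B * b = 0 \<and> Dfun A B * c = 0 \<and> Dfun A B * d = 0"
    unfolding Dfun_def by (rule cramer3[OF e12 e21 e3])
  have "Dfun A B * a = - (Dfun A B * b) * A$1$1 - (Dfun A B * c) * B$1$1 - (Dfun A B * d) * ?C$1$1"
  proof -
    have "a = - (b * A$1$1 + c * B$1$1 + d * ?C$1$1)"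
      using e11 eq_neg_iff_add_eq_0[of a "b * A$1$1 + c * B$1$1 + d * ?C$1$1"] by (simp add: add.assoc)
    then have "Dfun A B * a = Dfun A B * (- (b * A$1$1 + c * B$1$1 + d * ?C$1$1))" by (rule arg_cong)
    then show ?thesis by (simp add: algebra_simps)
  qed
  then show ?thesis using cr by simp
qed

lemma rhom_pCons: "rhom (\<lambda>c::'a::comm_ring_1. [:c:])"
  by (simp add: rhom_def)

lemma rhom_poly_eval: "rhom (\<lambda>p. poly p (t::'a::comm_ring_1))"
  by (simp add: rhom_def)

lemma line_arg:
  fixes p q :: "'a::field_char_0 mpoly"
  assumes pt: "\<And>val. peval id val q * peval id val p = 0" and g0: "peval id g0 q \<noteq> 0"
  shows "p = 0"
proof (rule vanish)
  fix val0 :: "evar \<Rightarrow> 'a"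
  define L where "L = peval (\<lambda>c. [:c:]) (\<lambda>v. [:val0 v, g0 v - val0 v:])"
  have rL: "rhom L" unfolding L_def by (rule rhom_peval[OF rhom_pCons])
  have ev: "poly (L r) t = peval id (\<lambda>v. val0 v + t * (g0 v - val0 v)) r" for r t
  proof -
    have "poly (L r) t = peval ((\<lambda>p. poly p t) \<circ> (\<lambda>c. [:c:])) ((\<lambda>p. poly p t) \<circ> (\<lambda>v. [:val0 v, g0 v - val0 v:])) r"
      unfolding L_def by (rule peval_comp[OF rhom_pCons rhom_poly_eval])
    also have "((\<lambda>p. poly p t) \<circ> (\<lambda>c. [:c:])) = (id :: 'a \<Rightarrow> 'a)" by (simp add: fun_eq_iff)
    also have "((\<lambda>p. poly p t) \<circ> (\<lambda>v. [:val0 v, g0 v - val0 v:])) = (\<lambda>v. val0 v + t * (g0 v - val0 v))"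
      by (simp add: fun_eq_iff)
    finally show ?thesis .
  qed
  have "poly (L q * L p) t = 0" for t
    using pt[of "\<lambda>v. val0 v + t * (g0 v - val0 v)"] by (simp add: ev)
  then have "L q * L p = 0" using poly_all_0_iff_0 by blast
  moreover have "L q \<noteq> 0"
  proof
    assume "L q = 0"
    then have "poly (L q) 1 = 0" by simp
    moreover have "(\<lambda>v. val0 v + 1 * (g0 v - val0 v)) = g0" by (simp add: fun_eq_iff)
    ultimately show False using g0 ev[of q 1] by simp
  qed
  ultimately have "L p = 0" by simp
  then have "poly (L p) 0 = 0" by simp
  moreover have "(\<lambda>v. val0 v + 0 * (g0 v - val0 v)) = val0" by (simp add: fun_eq_iff)
  ultimately show "peval id val0 p = 0" using ev[of p 0] by simp
qed


definition sig0 :: "nat \<Rightarrow> 'a::comm_ring_1 qpoly" where "sig0 k = qvar (min k 1)"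

definition Aof :: "(evar \<Rightarrow> 'b) \<Rightarrow> 'b^2^2" where "Aof val = (\<chi> i j. val (0, i, j))"
definition Bof :: "(evar \<Rightarrow> 'b) \<Rightarrow> 'b^2^2" where "Bof val = (\<chi> i j. val (1, i, j))"

lemma geval_qvar: "generic_eval (qvar k) = generic_matrix k"
  by (simp add: generic_eval_def qeval_qvar[OF rhom_id])

lemma map_generic: "map_matrix (peval id val) (generic_matrix k) = (\<chi> i j. val (k, i, j))"
  by (simp add: mat_entry_eq generic_matrix_def peval_pvar[OF rhom_id])

lemma phis0_eval:
  "peval id val (phis sig0 x) = peval id (valAB (Aof val) (Bof val)) (x :: 'a::field_char_0 mpoly)"
proof -
  have "peval id val (phis sig0 x) = peval (peval id val \<circ> pconst) (peval id val \<circ> gsig sig0) x"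
    unfolding phis_def by (rule peval_comp[OF rhom_pconst rhom_peval[OF rhom_id]])
  also have "peval id val \<circ> pconst = id" by (simp add: fun_eq_iff peval_pconst[OF rhom_id])
  also have "peval id val \<circ> gsig sig0 = valAB (Aof val) (Bof val)"
    by (auto simp: fun_eq_iff gsig_def sig0_def geval_qvar generic_matrix_def peval_pvar[OF rhom_id]
        valAB_def assign2_def Aof_def Bof_def)
  finally show ?thesis .
qed

lemma EAB_qvar_Suc0 [simp]: "EAB A B (qvar (Suc 0)) = B"
  using EAB_qvar1 by simp

lemma EAB_NF:
  "EAB A B (NF a b c d) = mscal (peval id (valAB A B) a) (mat 1) + mscal (peval id (valAB A B) b) A
     + mscal (peval id (valAB A B) c) B + mscal (peval id (valAB A B) d) (A ** B)"
  by (simp add: NF_def EAB_add EAB_mult EAB_qconst mscal_mat1)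

definition Dpoly :: "'a::comm_ring_1 mpoly" where
  "Dpoly = Dfun (generic_matrix 0) (generic_matrix 1)"

lemma peval_Dpoly: "peval id val Dpoly = Dfun (Aof val) (Bof val)"
  unfolding Dpoly_def rhom_Dfun[OF rhom_peval[OF rhom_id]] map_generic Aof_def Bof_def ..

definition g0 :: "evar \<Rightarrow> 'a::comm_ring_1" where
  "g0 = (\<lambda>(k, i, j). if k = 0 then (if i = 1 \<and> j = 1 then 1 else 0) else (if i = j then 0 else 1))"

lemma Dfun_g0: "Dfun (Aof g0) (Bof (g0 :: evar \<Rightarrow> 'a::field_char_0)) \<noteq> 0"
  by (simp add: Dfun_def det3_def mmult_entry Aof_def Bof_def g0_def)

lemma coeffs_zero:
  fixes a b c d :: "'a::field_char_0 mpoly"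
  assumes "\<forall>A B. EAB A B (NF a b c d) = 0"
  shows "phis sig0 a = 0 \<and> phis sig0 b = 0 \<and> phis sig0 c = 0 \<and> phis sig0 d = 0"
proof -
  have pw: "peval id val Dpoly * peval id val (phis sig0 a) = 0 \<and> peval id val Dpoly * peval id val (phis sig0 b) = 0 \<and>
            peval id val Dpoly * peval id val (phis sig0 c) = 0 \<and> peval id val Dpoly * peval id val (phis sig0 d) = 0"
    for val :: "evar \<Rightarrow> 'a"
    unfolding phis0_eval peval_Dpoly
    by (rule pointwise) (use assms in \<open>simp add: EAB_NF[symmetric]\<close>)
  have g: "peval id g0 Dpoly \<noteq> (0::'a)" unfolding peval_Dpoly by (rule Dfun_g0)
  show ?thesis using line_arg[OF _ g] pw by blast
qed

lemma peval_cong: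
  assumes "\<forall>m\<in>Poly_Mapping.keys p. \<forall>v\<in>Poly_Mapping.keys m. g v = g' v"
  shows "peval cf g p = peval cf g' p"
  unfolding peval_def using assms by (intro sum.cong refl arg_cong2[where f="(*)"] prod.cong) auto

lemma prod_list_sig0:
  "set l \<subseteq> {0, 1} \<Longrightarrow> prod_list (map sig0 l) = Poly_Mapping.single (Word l) (1 :: 'a::comm_ring_1 mpoly)"
proof (induction l)
  case Nil then show ?case by (simp add: Word_Nil_zero)
next
  case (Cons k l)
  then have k: "sig0 k = qvar k" by (auto simp: sig0_def)
  have "prod_list (map sig0 (k # l)) = qvar k * (prod_list (map sig0 l) :: 'a qpoly)" by (simp add: k)
  also have "\<dots> = qvar k * Poly_Mapping.single (Word l) 1"
  proof -
    have l: "set l \<subseteq> {0, 1}" using Cons.prems by simp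
    show ?thesis by (simp only: Cons.IH[OF l])
  qed
  also have "\<dots> = Poly_Mapping.single (Word (k # l)) 1" by (simp add: qvar_def mult_single plus_word_def)
  finally show ?case .
qed

lemma gsig0_var: "fst v \<le> 1 \<Longrightarrow> (\<lambda>(k, i, j). generic_eval (sig0 k) $ i $ j) v = (pvar v :: 'a::comm_ring_1 mpoly)"
proof -
  assume a: "fst v \<le> 1"
  obtain k i j where v: "v = (k, i, j)" by (cases v) auto
  then have "min k 1 = k" using a by simp
  then show ?thesis unfolding v by (simp add: sig0_def geval_qvar generic_matrix_def)
qed

lemma qsubst_sig0:
  assumes tv: "two_var_qpoly (P :: 'a::comm_ring_1 qpoly)"
  shows "qsubst sig0 P = P"
proof -
  have tv': "\<And>w. w \<in> Poly_Mapping.keys P \<Longrightarrow> set (letters w) \<subseteq> {0, 1}"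
   and tv'': "\<And>w m v. w \<in> Poly_Mapping.keys P \<Longrightarrow> m \<in> Poly_Mapping.keys (Poly_Mapping.lookup P w) \<Longrightarrow>
         v \<in> Poly_Mapping.keys m \<Longrightarrow> fst v \<le> 1"
    using tv unfolding two_var_qpoly_def by auto
  have trm: "qconst (peval pconst (\<lambda>(k, i, j). generic_eval (sig0 k) $ i $ j) (Poly_Mapping.lookup P w)) *
        prod_list (map sig0 (letters w)) = Poly_Mapping.single w (Poly_Mapping.lookup P w)"
    if w: "w \<in> Poly_Mapping.keys P" for w
  proof -
    have "peval pconst (\<lambda>(k, i, j). generic_eval (sig0 k) $ i $ j) (Poly_Mapping.lookup P w)
        = peval pconst pvar (Poly_Mapping.lookup P w)"
      by (rule peval_cong) (use tv''[OF w] gsig0_var in blast)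
    also have "\<dots> = Poly_Mapping.lookup P w" by (rule peval_pconst_pvar)
    finally have 1: "peval pconst (\<lambda>(k, i, j). generic_eval (sig0 k) $ i $ j) (Poly_Mapping.lookup P w) = Poly_Mapping.lookup P w" .
    have 2: "prod_list (map sig0 (letters w)) = Poly_Mapping.single (Word (letters w)) (1 :: 'a mpoly)"
      by (rule prod_list_sig0[OF tv'[OF w]])
    show ?thesis unfolding 1 2 by (simp add: qconst_def mult_single Word_Nil_zero)
  qed
  have "qsubst sig0 P = (\<Sum>w\<in>Poly_Mapping.keys P. Poly_Mapping.single w (Poly_Mapping.lookup P w))"
    unfolding qsubst_def by (rule sum.cong[OF refl]) (rule trm)
  also have "\<dots> = P" by (rule pm_expand[symmetric])
  finally show ?thesis .
qed

theorem mainTheorem17: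
  fixes P :: "'a::field_char_0 qpoly"
  assumes "two_var_qpoly P"
    and "quasi_identity_M2 P"
  shows "P \<in> T_ideal {Q2 (qvar 0) (qvar 1)}"
proof -
  obtain a b c d where Z: "Zs (P - NF a b c d)"
    using Good_P[OF assms(1)] unfolding Good_def by blast
  let ?N = "NF a b c d" and ?R = "P - NF a b c d"
  have RI: "?R \<in> T_ideal {Q2 (qvar 0) (qvar 1)}" using Z by (simp add: Zs_def)
  have EN: "\<forall>A B. EAB A B ?N = 0"
  proof (intro allI)
    fix A B
    have "EAB A B P = 0" using assms(2) by (simp add: quasi_identity_EAB)
    moreover have "EAB A B ?R = 0" using Z by (simp add: Zs_def)
    ultimately show "EAB A B ?N = 0" by (simp add: EAB_diff)
  qed
  have cz: "phis sig0 a = 0 \<and> phis sig0 b = 0 \<and> phis sig0 c = 0 \<and> phis sig0 d = 0"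
    by (rule coeffs_zero[OF EN])
  have "qsubst sig0 ?N = NF (phis sig0 a) (phis sig0 b) (phis sig0 c) (phis sig0 d)"
    by (simp add: NF_def rhom_add[OF rhom_qsubst] rhom_mult[OF rhom_qsubst] sig0_def)
  then have N0: "qsubst sig0 ?N = 0" using cz by (simp add: NF_def)
  have "P = qsubst sig0 P" using qsubst_sig0[OF assms(1)] by simp
  also have "\<dots> = qsubst sig0 (?N + ?R)" by (simp only: add.commute[of "NF a b c d"] diff_add_cancel)
  also have "\<dots> = qsubst sig0 ?N + qsubst sig0 ?R" by (rule rhom_add[OF rhom_qsubst])
  also have "\<dots> = qsubst sig0 ?R" by (simp only: N0 add_0_left)
  finally have eqP: "P = qsubst sig0 ?R" .
  have mem: "qsubst sig0 ?R \<in> T_ideal {Q2 (qvar 0) (qvar 1)}" by (rule T_ideal.subst[OF RI])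
  show ?thesis by (subst eqP) (rule mem)
qed


end
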